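(* (i) For every integer $m\ge1$ and every $n\ge0$, $$v_{2n+1}(x,m,s)=\sum_{k=0}^{n}(-1)^k\binom{2n+1}{2k+1}\frac{(m+2n-2k-1)!\,(2m+2n)!}{(m+2n)!\,(2m+2n-2k-1)!}\,\frac{T_{2k+1}}{2^{2k+1}}\,x^{2k+1}\,v_{2n-2k}(x,m,s).$$ (ii) For $m=0$ and every $n\ge 0$, $$v_{2n+1}(x,0,s)=\sum_{k=0}^{n-1}(-1)^k\binom{2n+1}{2k+1}\frac{T_{2k+1}}{2^{2k+1}}\,x^{2k+1}\,v_{2n-2k}(x,0,s)+(-1)^n\frac{T_{2n+1}}{2^{2n}}\,x^{2n+1}.$$
   Context: For an integer $m\ge0$ and indeterminates $x,s$, $v_0(x,m,s)=1$ and for $n\ge1$ $$v_n(x,m,s)=\sum_{k=0}^{\lfloor n/2\rfloor}(-1)^k\frac{n!}{k!\,(n-2k)!}\,\frac{(m+n-k-1)!}{(m+n-1)!}\,\frac{s^k}{2^{2k}}\,x^{n-2k}.$$ The tangent numbers $T_{2n+1}$ are defined by $\frac{e^z-e^{-z}}{e^z+e^{-z}}=\sum_{n\ge0}(-1)^n\frac{T_{2n+1}}{(2n+1)!}z^{2n+1}$ (so $T_1=1,T_3=2,T_5=16,\dots$). *)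

theory Defs
  imports "HOL-Computational_Algebra.Formal_Power_Series"
begin

text \<open>The polynomials v_n(x,m,s), evaluated at x, s in an arbitrary field of
characteristic zero (equivalent to the identity of polynomials in the indeterminates x, s).\<close>
definition vpoly :: "nat \<Rightarrow> 'a::field_char_0 \<Rightarrow> nat \<Rightarrow> 'a \<Rightarrow> 'a" where
  "vpoly n x m s =
     (if n = 0 then 1
      else (\<Sum>k = 0..n div 2. (-1) ^ k * (fact n / (fact k * fact (n - 2 * k)))
              * (fact (m + n - k - 1) / fact (m + n - 1))
              * s ^ k / 2 ^ (2 * k) * x ^ (n - 2 * k)))"

definition tanh_fps :: "'a::field_char_0 fps" where
  "tanh_fps = (fps_exp 1 - fps_exp (-1)) / (fps_exp 1 + fps_exp (-1))"

text \<open>Tangent number T_j (meaningful for odd j = 2n+1):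
  tanh z = sum_n (-1)^n T_{2n+1} / (2n+1)! z^{2n+1}.\<close>
definition tangent_number :: "nat \<Rightarrow> 'a::field_char_0" where
  "tangent_number j = (-1) ^ ((j - 1) div 2) * fact j * fps_nth tanh_fps j"

end

theory Submission
  imports Defs
begin


definition fsc :: "'a::field_char_0 \<Rightarrow> 'a fps \<Rightarrow> 'a fps" where
  "fsc c f = Abs_fps (\<lambda>n. c^n * fps_nth f n)"

lemma fsc_mult: "fsc c (f*g) = fsc c f * fsc c g"
proof -
  have "c^n * (\<Sum>i=0..n. fps_nth f i * fps_nth g (n-i)) = (\<Sum>i=0..n. (c^i * fps_nth f i) * (c^(n-i) * fps_nth g (n-i)))" for n
    unfolding sum_distrib_left
  proof (rule sum.cong)
    fix i assume "i \<in> {0..n}"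
    then have "c^n = c^i * c^(n-i)" by (simp add: power_add[symmetric])
    then show "c ^ n * (fps_nth f i * fps_nth g (n - i)) = c ^ i * fps_nth f i * (c ^ (n - i) * fps_nth g (n - i))"
      by (simp add: algebra_simps)
  qed simp
  then show ?thesis by (simp add: fsc_def fps_eq_iff fps_mult_nth)
qed

lemma fsc_add: "fsc c (f+g) = fsc c f + fsc c g"
  by (simp add: fsc_def fps_eq_iff algebra_simps)
lemma fsc_diff: "fsc c (f-g) = fsc c f - fsc c g"
  by (simp add: fsc_def fps_eq_iff algebra_simps)
lemma fsc_exp: "fsc c (fps_exp a) = fps_exp (c*a)"
  by (simp add: fsc_def fps_eq_iff power_mult_distrib)

lemma parity_mult_zero:
  fixes f g :: "'a::field fps"
  assumes "\<And>i. P i \<Longrightarrow> fps_nth f i = 0" "\<And>i. Q i \<Longrightarrow> fps_nth g i = 0"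
    and "\<And>i. i \<le> n \<Longrightarrow> P i \<or> Q (n-i)"
  shows "fps_nth (f*g) n = 0"
  unfolding fps_mult_nth
  by (rule sum.neutral) (use assms in fastforce)

lemma sum_odd_split:
  fixes f :: "nat \<Rightarrow> 'a::comm_monoid_add"
  shows "(\<Sum>i<2*n. f i) = (\<Sum>k<n. f (2*k) + f (2*k+1))"
  by (induction n) (simp_all add: algebra_simps)

lemma abstr5:
  fixes F Fk Fnk th w y sg P :: "'a::field"
  assumes nz: "Fk \<noteq> 0" "Fnk \<noteq> 0" "P \<noteq> 0" and sg: "sg * sg = 1"
  shows "F * (y / P * th * (w / Fnk)) = sg * (F / (Fk * Fnk)) * (sg * Fk * th / P) * y * w"
proof -
  have "sg * (F / (Fk * Fnk)) * (sg * Fk * th / P) * y * w = (sg*sg) * (F*y*th*w/(Fnk*P))"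
    using nz by (simp add: field_simps)
  also have "\<dots> = F*y*th*w/(Fnk*P)" by (simp add: sg)
  also have "\<dots> = F * (y / P * th * (w / Fnk))" using nz by (simp add: field_simps)
  finally show ?thesis by simp
qed

lemma tanh_step:
  fixes u :: "nat \<Rightarrow> 'a::field_char_0" and x :: 'a
  assumes hyp: "\<And>M. odd M \<Longrightarrow> fps_nth (fps_exp (-(x/2)) * Abs_fps (\<lambda>n. u n / fact n)) M = 0"
  shows "u (2*n+1) = (\<Sum>k=0..n. (-1)^k * of_nat ((2*n+1) choose (2*k+1))
                 * (tangent_number (2*k+1) / 2^(2*k+1)) * x^(2*k+1) * u (2*n-2*k))"
proof -
  have two: "fps_nth (2*f) j = 2 * fps_nth f j" for f :: "'a fps" and j
    by (simp only: mult_2 fps_add_nth)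
  define c where "c = x/2"
  define U where "U = Abs_fps (\<lambda>n. u n / fact n)"
  define E where "E = fps_exp c"
  define F where "F = fps_exp (-c)"
  define \<Phi> where "\<Phi> = F * U"
  have P0: "fps_nth \<Phi> M = 0" if "odd M" for M using hyp[OF that] by (simp add: \<Phi>_def F_def U_def c_def)
  have EF: "E * F = 1" using fps_exp_add_mult[of c "-c"] by (simp add: E_def F_def)
  have UE: "U = E * \<Phi>" by (simp add: \<Phi>_def EF mult.assoc[symmetric])
  define Co where "Co = E + F"
  define Si where "Si = E - F"
  have Co0: "fps_nth Co i = 0" if "odd i" for i using that by (simp add: Co_def E_def F_def power_minus_odd)
  have Si0: "fps_nth Si i = 0" if "even i" for i using that by (simp add: Si_def E_def F_def power_minus_even)
  have U2: "2 * U = Co * \<Phi> + Si * \<Phi>" by (simp add: UE Co_def Si_def algebra_simps)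
  define H where "H = fsc c tanh_fps"
  define D :: "'a fps" where "D = fps_exp 1 + fps_exp (-1)"
  have D0: "fps_nth D 0 = 2" by (simp add: D_def)
  hence Dnz: "D \<noteq> 0" by auto
  have sd: "subdegree D = 0" using D0 by (simp add: subdegree_eq_0_iff)
  have "tanh_fps * D = fps_exp 1 - fps_exp (-1)"
    unfolding tanh_fps_def D_def[symmetric]
    by (rule fps_times_divide_eq[OF Dnz]) (simp add: sd)
  hence "fsc c (tanh_fps * D) = fsc c (fps_exp 1 - fps_exp (-1))" by simp
  hence HCo: "H * Co = Si"
    by (simp add: fsc_mult fsc_diff fsc_add fsc_exp H_def D_def Co_def Si_def E_def F_def)
  define G where "G = Co * \<Phi>"
  have G0: "fps_nth G j = 0" if "odd j" for j
    unfolding G_def by (rule parity_mult_zero[where P=odd and Q=odd]) (use Co0 P0 that in auto)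
  have S0: "fps_nth (Si*\<Phi>) j = 0" if "even j" for j
    by (rule parity_mult_zero[where P=even and Q=odd]) (use Si0 P0 that in auto)
  have GU: "fps_nth G j = 2 * fps_nth U j" if "even j" for j
  proof -
    have "fps_nth (2*U) j = fps_nth G j + fps_nth (Si*\<Phi>) j" by (simp add: U2 G_def)
    then show ?thesis using S0[OF that] by (simp add: two)
  qed
  have "2 * fps_nth U (2*n+1) = fps_nth (2*U) (2*n+1)" by (simp add: two)
  also have "\<dots> = fps_nth (Si*\<Phi>) (2*n+1)" using G0[of "2*n+1"] by (simp add: U2 G_def)
  also have "\<dots> = fps_nth (H*G) (2*n+1)" by (simp add: G_def HCo mult.assoc[symmetric])
  also have "\<dots> = (\<Sum>i<2*(n+1). fps_nth H i * fps_nth G (2*n+1-i))"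
    by (simp add: fps_mult_nth atLeast0AtMost lessThan_Suc_atMost[symmetric])
  also have "\<dots> = (\<Sum>k<n+1. fps_nth H (2*k+1) * fps_nth G (2*n-2*k))"
  proof -
    have "(\<Sum>i<2*(n+1). fps_nth H i * fps_nth G (2*n+1-i)) = (\<Sum>k<n+1. fps_nth H (2*k) * fps_nth G (2*n+1-2*k) + fps_nth H (2*k+1) * fps_nth G (2*n+1-(2*k+1)))"
      by (rule sum_odd_split)
    also have "\<dots> = (\<Sum>k<n+1. fps_nth H (2*k+1) * fps_nth G (2*n-2*k))"
    proof (rule sum.cong)
      fix k assume "k \<in> {..<n+1}"
      then have "odd (2*n+1-2*k)" by auto
      then show "fps_nth H (2*k) * fps_nth G (2*n+1-2*k) + fps_nth H (2*k+1) * fps_nth G (2*n+1-(2*k+1)) = fps_nth H (2*k+1) * fps_nth G (2*n-2*k)"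
        using G0 by simp
    qed simp
    finally show ?thesis .
  qed
  also have "\<dots> = (\<Sum>k<n+1. fps_nth H (2*k+1) * (2 * fps_nth U (2*n-2*k)))"
    by (intro sum.cong refl) (simp add: GU)
  also have "\<dots> = 2 * (\<Sum>k<n+1. fps_nth H (2*k+1) * fps_nth U (2*n-2*k))"
    by (simp add: sum_distrib_left algebra_simps)
  finally have main0: "2 * fps_nth U (2*n+1) = 2 * (\<Sum>k<n+1. fps_nth H (2*k+1) * fps_nth U (2*n-2*k))" .
  have main: "fps_nth U (2*n+1) = (\<Sum>k<n+1. fps_nth H (2*k+1) * fps_nth U (2*n-2*k))"
    by (rule mult_left_cancel[THEN iffD1, OF _ main0]) simp
  have "u (2*n+1) = fact (2*n+1) * fps_nth U (2*n+1)" by (simp add: U_def del: fact_Suc)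
  also have "\<dots> = (\<Sum>k<n+1. fact (2*n+1) * (fps_nth H (2*k+1) * fps_nth U (2*n-2*k)))"
    by (simp only: main sum_distrib_left)
  also have "\<dots> = (\<Sum>k=0..n. (-1)^k * of_nat ((2*n+1) choose (2*k+1))
                 * (tangent_number (2*k+1) / 2^(2*k+1)) * x^(2*k+1) * u (2*n-2*k))"
    unfolding atLeast0AtMost lessThan_Suc_atMost[symmetric] Suc_eq_plus1
  proof (rule sum.cong)
    fix k assume "k \<in> {..<n+1}"
    then have kn: "k \<le> n" by auto
    have ch: "(of_nat ((2*n+1) choose (2*k+1)) :: 'a) = fact (2*n+1) / (fact (2*k+1) * fact (2*n-2*k))"
      using binomial_fact[of "2*k+1" "2*n+1", where 'a='a] kn by simp
    have T: "tangent_number (2*k+1) = (-1)^k * fact (2*k+1) * fps_nth tanh_fps (2*k+1)"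
      by (simp add: tangent_number_def)
    have m1: "((-1::'a)^k * (-1)^k) = 1" by (simp add: power_add[symmetric])
    show "fact (2*n+1) * (fps_nth H (2*k+1) * fps_nth U (2*n-2*k)) = (-1)^k * of_nat ((2*n+1) choose (2*k+1))
                 * (tangent_number (2*k+1) / 2^(2*k+1)) * x^(2*k+1) * u (2*n-2*k)"
      unfolding ch T H_def U_def fsc_def c_def fps_nth_Abs_fps power_divide
      by (rule abstr5[OF fact_nonzero fact_nonzero _ m1]) simp
  qed simp
  finally show ?thesis .
qed




lemma ode_step:
  fixes u :: "nat \<Rightarrow> 'a::field_char_0" and x s :: 'a and m :: nat
  assumes rec: "\<And>n. n \<ge> 1 \<Longrightarrow> of_nat (n+2*m) * u (n+1) = x * of_nat (n+m) * u n - s/4 * of_nat n * u (n-1)"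
    and init: "2 * u 1 = x * u 0"
    and M: "odd M"
  shows "fps_nth (fps_exp (-(x/2)) * Abs_fps (\<lambda>n. u n / fact n)) M = 0"
proof -
  define c where "c = x/2"
  define U where "U = Abs_fps (\<lambda>n. u n / fact n)"
  define E where "E = fps_exp c"
  define F where "F = fps_exp (-c)"
  define \<Phi> where "\<Phi> = F * U"
  define X :: "'a fps" where "X = fps_X"
  define C where "C = fps_const c"
  define Mm2 where "Mm2 = fps_const (of_nat (2*m) :: 'a)"
  define Cx where "Cx = fps_const x"
  define Cmx where "Cmx = fps_const (of_nat m * x)"
  define Q where "Q = fps_const (s/4)"
  define Qd where "Qd = fps_const (c*c - s/4)"
  have EF: "E * F = 1" using fps_exp_add_mult[of c "-c"] by (simp add: E_def F_def)
  have UE: "U = E * \<Phi>" by (simp add: \<Phi>_def EF mult.assoc[symmetric])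
  have ODEU: "X * fps_deriv (fps_deriv U) + Mm2 * fps_deriv U - Cx * (X * fps_deriv U)
      + Q * (X * U) - Cmx * U = 0"
  proof (rule fps_ext)
    fix n
    show "fps_nth (X * fps_deriv (fps_deriv U) + Mm2 * fps_deriv U - Cx * (X * fps_deriv U)
      + Q * (X * U) - Cmx * U) n = fps_nth 0 n"
    proof (cases n)
      case 0
      then show ?thesis using init
        by (simp add: X_def Mm2_def Cx_def Q_def Cmx_def U_def algebra_simps)
    next
      case (Suc j)
      have r: "of_nat (j+1+2*m) * u (j+2) = x * of_nat (j+1+m) * u (j+1) - s/4 * of_nat (j+1) * u j"
        using rec[of "j+1"] by (simp add: numeral_2_eq_2)
      have f2: "(fact (j+2) :: 'a) = of_nat (j+2) * of_nat (j+1) * fact j"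
        by (simp add: numeral_2_eq_2 fact_Suc)
      have f1: "(fact (j+1) :: 'a) = of_nat (j+1) * fact j"
        by (simp add: fact_Suc)
      have fj: "(fact j :: 'a) \<noteq> 0" by simp
      have "fps_nth (X * fps_deriv (fps_deriv U) + Mm2 * fps_deriv U - Cx * (X * fps_deriv U)
        + Q * (X * U) - Cmx * U) n =
        of_nat (j+1) * (of_nat (j+2) * (u (j+2) / fact (j+2))) + of_nat (2*m) * (of_nat (j+2) * (u (j+2) / fact (j+2)))
         - x * (of_nat (j+1) * (u (j+1) / fact (j+1))) + s/4 * (u j / fact j) - of_nat m * x * (u (j+1) / fact (j+1))"
        by (simp add: Suc X_def Mm2_def Cx_def Q_def Cmx_def U_def numeral_2_eq_2 algebra_simps)
      also have "\<dots> = (of_nat (j+1+2*m) * u (j+2) - x * of_nat (j+1+m) * u (j+1) + s/4 * of_nat (j+1) * u j) / (of_nat (j+1) * fact j)"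
      proof -
        define a where "a = (of_nat (j+1) :: 'a)"
        define F where "F = (fact j :: 'a)"
        have a0: "a \<noteq> 0" unfolding a_def by (simp only: of_nat_eq_0_iff)
        have e1: "(of_nat (j+2)::'a) = a + 1" by (simp add: a_def)
        have "(of_nat (j+2)::'a) \<noteq> 0" by (subst of_nat_eq_0_iff) simp
        then have a1: "a + 1 \<noteq> 0" using e1 by metis
        have e2: "(of_nat (j+1+2*m)::'a) = a + of_nat (2*m)" by (simp add: a_def)
        have e3: "(of_nat (j+1+m)::'a) = a + of_nat m" by (simp add: a_def)
        have F0: "F \<noteq> 0" by (simp add: F_def)
        define q2 where "q2 = u (j+2) / fact (j+2)"
        define q1 where "q1 = u (j+1) / fact (j+1)"
        define q0 where "q0 = u j / fact j"
        have fa2: "(fact (j+2)::'a) = (a+1)*a*F" unfolding f2 e1 a_def F_def ..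
        have fa1: "(fact (j+1)::'a) = a*F" unfolding f1 a_def F_def ..
        have U2: "u (j+2) = q2 * ((a+1)*a*F)" unfolding fa2[symmetric] using nonzero_eq_divide_eq[OF fact_nonzero] q2_def by metis
        have U1: "u (j+1) = q1 * (a*F)" unfolding fa1[symmetric] using nonzero_eq_divide_eq[OF fact_nonzero] q1_def by metis
        have U0: "u j = q0 * F" unfolding F_def using nonzero_eq_divide_eq[OF fact_nonzero] q0_def by metis
        define P where "P = (a + of_nat (2*m)) * q2 * (a+1) - x * (a + of_nat m) * q1 + s/4 * q0"
        have R: "of_nat (j+1+2*m) * u (j+2) - x * of_nat (j+1+m) * u (j+1) + s/4 * of_nat (j+1) * u j
           = (a*F) * P"
          unfolding U2 U1 U0 e2 e3 a_def[symmetric] P_def by (simp add: algebra_simps)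
        have aF: "a*F \<noteq> 0" using a0 F0 by simp
        have 1: "(of_nat (j+1+2*m) * u (j+2) - x * of_nat (j+1+m) * u (j+1) + s/4 * of_nat (j+1) * u j) / (of_nat (j+1) * fact j) = P"
          unfolding R using aF unfolding a_def F_def by simp
        have 2: "of_nat (j+1) * (of_nat (j+2) * (u (j+2) / fact (j+2))) + of_nat (2*m) * (of_nat (j+2) * (u (j+2) / fact (j+2)))
         - x * (of_nat (j+1) * (u (j+1) / fact (j+1))) + s/4 * (u j / fact j) - of_nat m * x * (u (j+1) / fact (j+1)) = P"
          unfolding q2_def[symmetric] q1_def[symmetric] q0_def[symmetric] e1 a_def[symmetric] P_def
          by (simp add: algebra_simps)
        show ?thesis unfolding 1 2 ..
      qed
      also have "\<dots> = 0" using r by simp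
      finally show ?thesis by simp
    qed
  qed
  have dC: "fps_deriv C = 0" by (simp add: C_def)
  have dE: "fps_deriv E = C * E" by (simp add: E_def C_def)
  have dU: "fps_deriv U = C * E * \<Phi> + E * fps_deriv \<Phi>"
    by (simp add: UE dE)
  have ddU: "fps_deriv (fps_deriv U) = C * C * E * \<Phi> + 2 * C * E * fps_deriv \<Phi> + E * fps_deriv (fps_deriv \<Phi>)"
    by (simp add: dU dE dC algebra_simps del: fps_deriv_mult_const_left)
  have rel1: "Cx = C + C" by (simp add: Cx_def C_def c_def)
  have rel2: "Cmx = fps_const (of_nat m) * Cx" by (simp add: Cmx_def Cx_def)
  have rel3: "Mm2 = fps_const (of_nat m) + fps_const (of_nat m)" by (simp add: Mm2_def)
  have rel4: "Qd = C * C - Q" by (simp add: Qd_def C_def Q_def)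
  define Z where "Z = X * fps_deriv (fps_deriv \<Phi>) + Mm2 * fps_deriv \<Phi> - Qd * (X * \<Phi>)"
  have "E * Z = 0"
    using ODEU unfolding ddU unfolding dU unfolding UE unfolding Z_def rel1 rel2 rel3 rel4
    by algebra
  then have "F * (E * Z) = 0" by simp
  then have Z0: "Z = 0" using EF by (simp add: mult.assoc[symmetric] mult.commute)
  have step: "of_nat (j+2) * of_nat (j+1+2*m) * fps_nth \<Phi> (j+2) = (c*c - s/4) * fps_nth \<Phi> j" for j
  proof -
    have "fps_nth Z (Suc j) = 0" using Z0 by simp
    then show ?thesis
      by (simp add: Z_def X_def Mm2_def Qd_def numeral_2_eq_2 algebra_simps)
  qed
  have P1: "fps_nth \<Phi> 1 = 0"
    using init by (simp add: \<Phi>_def F_def U_def c_def algebra_simps)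
  have "fps_nth \<Phi> (2*i+1) = 0" for i
  proof (induction i)
    case 0 then show ?case using P1 by simp
  next
    case (Suc i)
    have "of_nat (2*i+1+2) * of_nat (2*i+1+1+2*m) * fps_nth \<Phi> (2*i+1+2) = (0::'a)"
      using step[of "2*i+1"] Suc by simp
    moreover have "(of_nat (2*i+1+2) * of_nat (2*i+1+1+2*m) :: 'a) \<noteq> 0" by (subst of_nat_mult[symmetric], subst of_nat_eq_0_iff) simp
    ultimately have "fps_nth \<Phi> (2*i+1+2) = 0" by simp
    then show ?case by (simp add: numeral_2_eq_2)
  qed
  then show ?thesis using M unfolding \<Phi>_def F_def U_def c_def by (metis oddE)
qed




definition At :: "nat \<Rightarrow> 'a::field_char_0 \<Rightarrow> 'a \<Rightarrow> nat \<Rightarrow> nat \<Rightarrow> 'a" where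
  "At m x s n k = (-1) ^ k * (fact n / (fact k * fact (n - 2 * k)))
              * (fact (m + n - k - 1) / fact (m + n - 1))
              * s ^ k / 2 ^ (2 * k) * x ^ (n - 2 * k)"

definition Bt :: "nat \<Rightarrow> 'a::field_char_0 \<Rightarrow> 'a \<Rightarrow> nat \<Rightarrow> nat \<Rightarrow> 'a" where
  "Bt m x s n k = (if 2*k \<le> n then At m x s n k else 0)"

lemma vpoly_At: "vpoly n x m s = (\<Sum>k=0..n div 2. At m x s n k)"
  by (cases "n = 0") (simp_all add: vpoly_def At_def)

lemma vpoly_Bt:
  assumes "n div 2 < R"
  shows "vpoly n x m s = (\<Sum>k<R. Bt m x s n k)"
  unfolding vpoly_At
proof (rule sum.mono_neutral_cong_left)
  show "{0..n div 2} \<subseteq> {..<R}" using assms by auto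
  show "\<forall>i\<in>{..<R} - {0..n div 2}. Bt m x s n i = 0"
    by (auto simp: Bt_def)
  show "\<And>k. k \<in> {0..n div 2} \<Longrightarrow> At m x s n k = Bt m x s n k"
    by (auto simp: Bt_def)
qed simp

lemma abstr1:
  fixes fk fj F0 G0 H0 k1 j1 h1 h2 p2 p3 g1 q sg S T X x s :: "'a::field"
  assumes nz: "fk \<noteq> 0" "fj \<noteq> 0" "H0 \<noteq> 0" "k1 \<noteq> 0" "j1 \<noteq> 0" "h1 \<noteq> 0" "h2 \<noteq> 0" "T \<noteq> 0"
    and key: "p3 * g1 = h2 * j1 + q * k1"
  shows "h2*h1 * (-sg * (p3*p2*F0/(k1*fk*(j1*fj))) * (g1*G0/(h2*h1*H0)) * (s*S)/(4*T) * (x*X))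
       = x*(h2*h1) * (-sg * (p2*F0/(k1*fk*fj)) * (G0/(h1*H0)) * (s*S)/(4*T) * X)
         - s/4 * (p2*q) * (sg * (F0/(fk*(j1*fj))) * (G0/H0) * S/T * (x*X))"
proof -
  have "h2*h1 * (-sg * (p3*p2*F0/(k1*fk*(j1*fj))) * (g1*G0/(h2*h1*H0)) * (s*S)/(4*T) * (x*X))
      = - (p3 * g1) * (sg*p2*F0*G0*s*S*x*X / (k1*fk*j1*fj*H0*4*T))"
    using nz by (simp add: field_simps)
  also have "\<dots> = - (h2 * j1 + q * k1) * (sg*p2*F0*G0*s*S*x*X / (k1*fk*j1*fj*H0*4*T))"
    by (simp only: key)
  also have "\<dots> = x*(h2*h1) * (-sg * (p2*F0/(k1*fk*fj)) * (G0/(h1*H0)) * (s*S)/(4*T) * X)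
         - s/4 * (p2*q) * (sg * (F0/(fk*(j1*fj))) * (G0/H0) * S/T * (x*X))"
  proof -
    define W where "W = sg*p2*F0*G0*s*S*x*X / (k1*fk*j1*fj*H0*4*T)"
    have t1: "x*(h2*h1) * (-sg * (p2*F0/(k1*fk*fj)) * (G0/(h1*H0)) * (s*S)/(4*T) * X) = -(h2*j1) * W"
      unfolding W_def using nz by (simp add: field_simps)
    have t2: "s/4 * (p2*q) * (sg * (F0/(fk*(j1*fj))) * (G0/H0) * S/T * (x*X)) = (q*k1) * W"
      unfolding W_def using nz by (simp add: field_simps)
    show ?thesis unfolding t1 t2 W_def[symmetric] by (simp add: algebra_simps)
  qed
  finally show ?thesis .
qed

lemma abstr2:
  fixes fl F0 G0 H0 l2 h2 h3 p3 p4 g1 q sg S T s :: "'a::field"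
  assumes nz: "fl \<noteq> 0" "H0 \<noteq> 0" "l2 \<noteq> 0" "h2 \<noteq> 0" "h3 \<noteq> 0" "T \<noteq> 0"
    and key: "p4 * g1 = l2 * q"
  shows "h3*h2 * (-sg * (p4*p3*F0/(l2*fl)) * (g1*G0/(h3*h2*H0)) * (s*S)/(4*T))
       = - (s/4) * (p3*q) * (sg * (F0/fl) * (G0/H0) * S/T)"
proof -
  have "h3*h2 * (-sg * (p4*p3*F0/(l2*fl)) * (g1*G0/(h3*h2*H0)) * (s*S)/(4*T))
      = - (p4 * g1) * (sg*p3*F0*G0*s*S / (l2*fl*H0*4*T))"
    using nz by (simp add: field_simps)
  also have "\<dots> = - (l2 * q) * (sg*p3*F0*G0*s*S / (l2*fl*H0*4*T))"
    by (simp only: key)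
  also have "\<dots> = - (s/4) * (p3*q) * (sg * (F0/fl) * (G0/H0) * S/T)"
    using nz by (simp add: field_simps)
  finally show ?thesis .
qed

lemma factSS: "(fact (n+2)::'a::semiring_char_0) = of_nat (n+2) * of_nat (n+1) * fact n"
  by (simp add: numeral_2_eq_2 fact_Suc mult.assoc del: of_nat_Suc)
lemma factS: "(fact (n+1)::'a::semiring_char_0) = of_nat (n+1) * fact n"
  by (simp add: fact_Suc del: of_nat_Suc)

lemma ofnz: "n \<noteq> 0 \<Longrightarrow> (of_nat n :: 'a::semiring_char_0) \<noteq> 0"
  by simp

lemma of_nat_nz: "(of_nat (Suc n) :: 'a::semiring_char_0) \<noteq> 0"
  by (subst of_nat_eq_0_iff) simp

lemma caseI:
  fixes x s :: "'a::field_char_0"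
  shows "of_nat ((m+2*K+J+2)*(m+2*K+J+1)) * At m x s (2*K+J+3) (K+1)
    = x * of_nat ((m+2*K+J+2)*(m+2*K+J+1)) * At m x s (2*K+J+2) (K+1)
      - s/4 * of_nat ((2*K+J+2)*(2*m+2*K+J+1)) * At m x s (2*K+J+1) K"
proof -
  have e1: "2*K+J+3 - 2*(K+1) = J+1" "m + (2*K+J+3) - (K+1) - 1 = m+K+J+1" "m + (2*K+J+3) - 1 = m+2*K+J+2"
    "2*K+J+2 - 2*(K+1) = J" "m + (2*K+J+2) - (K+1) - 1 = m+K+J" "m + (2*K+J+2) - 1 = m+2*K+J+1"
    "2*K+J+1 - 2*K = J+1" "m + (2*K+J+1) - K - 1 = m+K+J" "m + (2*K+J+1) - 1 = m+2*K+J" by simp_all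
  have f1: "(fact (2*K+J+3)::'a) = of_nat (2*K+J+3) * of_nat (2*K+J+2) * fact (2*K+J+1)"
  proof -
    have h: "2*K+J+3 = (2*K+J+1)+2" "2*K+J+2 = (2*K+J+1)+1" by simp_all
    show ?thesis unfolding h by (rule factSS)
  qed
  have f2: "(fact (2*K+J+2)::'a) = of_nat (2*K+J+2) * fact (2*K+J+1)"
  proof -
    have h: "2*K+J+2 = (2*K+J+1)+1" by simp_all
    show ?thesis unfolding h by (rule factS)
  qed
  have f3: "(fact (K+1)::'a) = of_nat (K+1) * fact K" by (rule factS)
  have f4: "(fact (J+1)::'a) = of_nat (J+1) * fact J" by (rule factS)
  have f5: "(fact (m+K+J+1)::'a) = of_nat (m+K+J+1) * fact (m+K+J)" by (rule factS)
  have f6: "(fact (m+2*K+J+2)::'a) = of_nat (m+2*K+J+2) * of_nat (m+2*K+J+1) * fact (m+2*K+J)" by (rule factSS)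
  have f7: "(fact (m+2*K+J+1)::'a) = of_nat (m+2*K+J+1) * fact (m+2*K+J)" by (rule factS)
  note f = f1 f2 f3 f4 f5 f6 f7
  have p: "((-1::'a)^(K+1)) = - ((-1)^K)" "s^(K+1) = s * s^K" "(2::'a)^(2*(K+1)) = 4 * 2^(2*K)"
    "x^(J+1) = x * x^J" by (simp_all add: power_add)
  have natkey: "(2*K+J+3)*(m+K+J+1) = (m+2*K+J+2)*(J+1) + (2*m+2*K+J+1)*(K+1)"
    by (simp add: algebra_simps)
  have key: "(of_nat (2*K+J+3) :: 'a) * of_nat (m+K+J+1) = of_nat (m+2*K+J+2) * of_nat (J+1) + of_nat (2*m+2*K+J+1) * of_nat (K+1)"
    by (metis natkey of_nat_mult of_nat_add)
  have T0: "(2::'a)^(2*K) \<noteq> 0" by simp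
  show ?thesis
    unfolding At_def e1 f p of_nat_mult
    apply (rule abstr1[OF _ _ _ _ _ _ _ _ key])
    apply (rule fact_nonzero)+
    apply (subst of_nat_eq_0_iff, arith)+
    apply (rule T0)
    done
qed

lemma caseII:
  fixes x s :: "'a::field_char_0"
  shows "of_nat ((m+2*L+3)*(m+2*L+2)) * At m x s (2*L+4) (L+2)
    = - (s/4) * of_nat ((2*L+3)*(2*m+2*L+2)) * At m x s (2*L+2) (L+1)"
proof -
  have e1: "2*L+4 - 2*(L+2) = 0" "m + (2*L+4) - (L+2) - 1 = m+L+1" "m + (2*L+4) - 1 = m+2*L+3"
    "2*L+2 - 2*(L+1) = 0" "m + (2*L+2) - (L+1) - 1 = m+L" "m + (2*L+2) - 1 = m+2*L+1" by simp_all
  have f1: "(fact (2*L+4)::'a) = of_nat (2*L+4) * of_nat (2*L+3) * fact (2*L+2)"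
  proof -
    have h: "2*L+4 = (2*L+2)+2" "2*L+3 = (2*L+2)+1" by simp_all
    show ?thesis unfolding h by (rule factSS)
  qed
  have f2: "(fact (L+2)::'a) = of_nat (L+2) * fact (L+1)"
  proof -
    have h: "L+2 = (L+1)+1" by simp_all
    show ?thesis unfolding h by (rule factS)
  qed
  have f3: "(fact (m+L+1)::'a) = of_nat (m+L+1) * fact (m+L)" by (rule factS)
  have f4: "(fact (m+2*L+3)::'a) = of_nat (m+2*L+3) * of_nat (m+2*L+2) * fact (m+2*L+1)"
  proof -
    have h: "m+2*L+3 = (m+2*L+1)+2" "m+2*L+2 = (m+2*L+1)+1" by simp_all
    show ?thesis unfolding h by (rule factSS)
  qed
  note f = f1 f2 f3 f4
  have p: "((-1::'a)^(L+2)) = - ((-1)^(L+1))" "s^(L+2) = s * s^(L+1)" "(2::'a)^(2*(L+2)) = 4 * 2^(2*(L+1))"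
    by (simp_all add: power_add)
  have natkey: "(2*L+4)*(m+L+1) = (L+2)*(2*m+2*L+2)"
    by (simp add: algebra_simps)
  have key: "(of_nat (2*L+4) :: 'a) * of_nat (m+L+1) = of_nat (L+2) * of_nat (2*m+2*L+2)"
    by (metis natkey of_nat_mult)
  have T0: "(2::'a)^(2*(L+1)) \<noteq> 0" by simp
  show ?thesis
    unfolding At_def e1 f p of_nat_mult power_0 fact_0 mult_1_right
    apply (rule abstr2[OF _ _ _ _ _ _ key])
    apply (rule fact_nonzero)+
    apply (subst of_nat_eq_0_iff, arith)+
    apply (rule T0)
    done
qed




lemma Bt0: "Bt m x s n 0 = x ^ n"
  by (simp add: Bt_def At_def)

lemma termK:
  fixes x s :: "'a::field_char_0"
  shows "of_nat ((m+N+2)*(m+N+1)) * Bt m x s (N+3) (Suc K)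
    = x * of_nat ((m+N+2)*(m+N+1)) * Bt m x s (N+2) (Suc K)
      - s/4 * of_nat ((N+2)*(2*m+N+1)) * Bt m x s (N+1) K"
proof -
  consider (i) "2*K \<le> N" | (ii) "2*K = N+1" | (iii) "2*K > N+1" by linarith
  then show ?thesis
  proof cases
    case i
    then obtain J where N: "N = 2*K+J" using le_Suc_ex by blast
    have c: "of_nat ((m+2*K+J+2)*(m+2*K+J+1)) * At m x s (2*K+J+3) (K+1)
    = x * of_nat ((m+2*K+J+2)*(m+2*K+J+1)) * At m x s (2*K+J+2) (K+1)
      - s/4 * of_nat ((2*K+J+2)*(2*m+2*K+J+1)) * At m x s (2*K+J+1) K" by (rule caseI)
    have e: "m+N+2 = m+2*K+J+2" "m+N+1 = m+2*K+J+1" "N+3 = 2*K+J+3" "N+2 = 2*K+J+2" "N+1 = 2*K+J+1"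
      "2*m+N+1 = 2*m+2*K+J+1" "Suc K = K+1" using N by simp_all
    have b: "Bt m x s (2*K+J+3) (K+1) = At m x s (2*K+J+3) (K+1)"
      "Bt m x s (2*K+J+2) (K+1) = At m x s (2*K+J+2) (K+1)"
      "Bt m x s (2*K+J+1) K = At m x s (2*K+J+1) K" by (simp_all add: Bt_def)
    show ?thesis unfolding e b by (rule c)
  next
    case ii
    define L where "L = K - 1"
    have K: "K = L+1" using ii unfolding L_def by simp
    have N: "N = 2*L+1" using ii K by simp
    have c: "of_nat ((m+2*L+3)*(m+2*L+2)) * At m x s (2*L+4) (L+2)
    = - (s/4) * of_nat ((2*L+3)*(2*m+2*L+2)) * At m x s (2*L+2) (L+1)" by (rule caseII)
    have e: "m+N+2 = m+2*L+3" "m+N+1 = m+2*L+2" "N+3 = 2*L+4" "N+2 = 2*L+3" "N+1 = 2*L+2"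
      "2*m+N+1 = 2*m+2*L+2" "Suc K = L+2" using N K by simp_all
    have b: "Bt m x s (2*L+4) (L+2) = At m x s (2*L+4) (L+2)"
      "Bt m x s (2*L+3) (L+2) = 0"
      "Bt m x s (2*L+2) (L+1) = At m x s (2*L+2) (L+1)" by (simp_all add: Bt_def)
    show ?thesis unfolding e unfolding K unfolding b using c by simp
  next
    case iii
    then show ?thesis by (simp add: Bt_def)
  qed
qed

lemma vrec:
  fixes x s :: "'a::field_char_0"
  shows "of_nat ((m+N+2)*(m+N+1)) * vpoly (N+3) x m s
    = x * of_nat ((m+N+2)*(m+N+1)) * vpoly (N+2) x m s
      - s/4 * of_nat ((N+2)*(2*m+N+1)) * vpoly (N+1) x m s"
proof -
  define c1 :: 'a where "c1 = of_nat ((m+N+2)*(m+N+1))"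
  define c2 :: 'a where "c2 = of_nat ((N+2)*(2*m+N+1))"
  have v3: "vpoly (N+3) x m s = Bt m x s (N+3) 0 + (\<Sum>k<N+3. Bt m x s (N+3) (Suc k))"
  proof -
    have a: "(N+3) div 2 < Suc (N+3)" by simp
    show ?thesis unfolding vpoly_Bt[OF a] sum.lessThan_Suc_shift ..
  qed
  have v2: "vpoly (N+2) x m s = Bt m x s (N+2) 0 + (\<Sum>k<N+3. Bt m x s (N+2) (Suc k))"
  proof -
    have a: "(N+2) div 2 < Suc (N+3)" by simp
    show ?thesis unfolding vpoly_Bt[OF a] sum.lessThan_Suc_shift ..
  qed
  have v1: "vpoly (N+1) x m s = (\<Sum>k<N+3. Bt m x s (N+1) k)"
    by (rule vpoly_Bt) simp
  have "c1 * vpoly (N+3) x m s = c1 * Bt m x s (N+3) 0 + (\<Sum>k<N+3. c1 * Bt m x s (N+3) (Suc k))"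
    unfolding v3 by (simp add: sum_distrib_left distrib_left)
  also have "\<dots> = x * c1 * Bt m x s (N+2) 0 + (\<Sum>k<N+3. x * c1 * Bt m x s (N+2) (Suc k) - s/4 * c2 * Bt m x s (N+1) k)"
  proof -
    have xp: "x^(N+3) = x * x^(N+2)"
    proof -
      have "N+3 = Suc (N+2)" by simp
      then show ?thesis by (simp only: power_Suc)
    qed
    show ?thesis unfolding c1_def c2_def termK Bt0 xp by (simp add: algebra_simps)
  qed
  also have "\<dots> = x * c1 * vpoly (N+2) x m s - s/4 * c2 * vpoly (N+1) x m s"
    unfolding v2 v1 by (simp add: sum_subtractf sum_distrib_left distrib_left mult.assoc)
  finally show ?thesis unfolding c1_def c2_def .
qed

lemma vrec1:
  fixes x s :: "'a::field_char_0"
  shows "of_nat ((m+1)*m) * vpoly 2 x m s = x * of_nat ((m+1)*m) * vpoly 1 x m s - s/4 * of_nat (2*m) * vpoly 0 x m s"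
proof -
  have v2: "vpoly 2 x m s = x^2 - 2 * (fact m / fact (m+1)) * s / 4"
  proof -
    have "vpoly 2 x m s = (\<Sum>k=0..1. (-1) ^ k * (fact 2 / (fact k * fact (2 - 2 * k)))
              * (fact (m + 2 - k - 1) / fact (m + 2 - 1))
              * s ^ k / 2 ^ (2 * k) * x ^ (2 - 2 * k))" by (simp add: vpoly_def)
    also have "\<dots> = x^2 - 2 * (fact m / fact (m+1)) * s / 4"
    proof -
      have ff: "(fact (Suc (Suc 0))::'a) = 2" by (simp add: numeral_2_eq_2)
      have g: "\<And>F G::'a. 2 * F * s / (G * 4) = s * F / (2 * G)"
        by (simp add: divide_simps)
      show ?thesis by (simp add: numeral_2_eq_2 ff g del: fact_Suc)
    qed
    finally show ?thesis .
  qed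
  have v1: "vpoly 1 x m s = x" by (simp add: vpoly_def)
  have v0: "vpoly 0 x m s = 1" by (simp add: vpoly_def)
  have f: "(fact (m+1) :: 'a) = of_nat (m+1) * fact m" by (rule factS)
  have m1: "(of_nat (m+1) :: 'a) \<noteq> 0" by (subst of_nat_eq_0_iff) simp
  define a :: 'a where "a = of_nat (m+1)"
  have r: "fact m / fact (m+1) = (1::'a) / a" using m1 unfolding f a_def by simp
  have e: "(of_nat ((m+1)*m) :: 'a) = a * of_nat m" "(of_nat (2*m) :: 'a) = 2 * of_nat m"
    by (simp_all add: a_def algebra_simps)
  have a0: "a \<noteq> 0" using m1 by (simp add: a_def)
  show ?thesis unfolding v2 v1 v0 r e using a0 by (simp add: field_simps power2_eq_square)
qed



lemma vrecG:
  fixes x s :: "'a::field_char_0"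
  shows "of_nat ((m+N+1)*(m+N)) * vpoly (N+2) x m s
    = x * of_nat ((m+N+1)*(m+N)) * vpoly (N+1) x m s
      - s/4 * of_nat ((N+1)*(2*m+N)) * vpoly N x m s"
proof (cases "N = 0")
  case True
  then show ?thesis using vrec1[of m x s] by (simp add: numeral_2_eq_2)
next
  case False
  define N' where "N' = N - 1"
  have N: "N = N'+1" using False unfolding N'_def by simp
  show ?thesis using vrec[of m N' x s] unfolding N by (simp add: algebra_simps numeral_3_eq_3 numeral_2_eq_2)
qed

lemma abstr3:
  fixes A B G H P p q v v1 v2 x s :: "'a::field"
  assumes nz: "p \<noteq> 0" "q \<noteq> 0" "H \<noteq> 0"
    and R: "A*B*v1 = x*(A*B)*v - s/4*(P*p)*v2"
  shows "q * (v1 * (A*B*G/(q*p*H))) = x*A*(v*(B*G/(p*H))) - s/4*P*(v2*(G/H))"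
proof -
  have "q * (v1 * (A*B*G/(q*p*H))) = (A*B*v1) * (G/(p*H))" using nz by (simp add: field_simps)
  also have "\<dots> = (x*(A*B)*v - s/4*(P*p)*v2) * (G/(p*H))" by (simp only: R)
  also have "\<dots> = x*A*(v*(B*G/(p*H))) - s/4*P*(v2*(G/H))" using nz by (simp add: field_simps)
  finally show ?thesis .
qed

lemma urec_pos:
  fixes x s :: "'a::field_char_0" and M N :: nat
  defines "u \<equiv> (\<lambda>n. vpoly n x (M+1) s * (fact (M+1+n-1) / fact (2*(M+1)+n-1)))"
  shows "of_nat (N+1 + 2*(M+1)) * u (N+1+1) = x * of_nat (N+1 + (M+1)) * u (N+1) - s/4 * of_nat (N+1) * u (N+1-1)"
proof -
  have R: "of_nat ((M+1+N+1)*(M+1+N)) * vpoly (N+2) x (M+1) s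
    = x * of_nat ((M+1+N+1)*(M+1+N)) * vpoly (N+1) x (M+1) s
      - s/4 * of_nat ((N+1)*(2*(M+1)+N)) * vpoly N x (M+1) s" by (rule vrecG)
  have eR: "M+1+N+1 = M+N+2" "M+1+N = M+N+1" "2*(M+1)+N = 2*M+N+2" by simp_all
  have e: "N+1+1 = N+2" "N+1-1 = N"
    "M+1+(N+2)-1 = M+N+2" "2*(M+1)+(N+2)-1 = 2*M+N+3" "M+1+(N+1)-1 = M+N+1" "2*(M+1)+(N+1)-1 = 2*M+N+2"
    "M+1+N-1 = M+N" "2*(M+1)+N-1 = 2*M+N+1" "N+1+2*(M+1) = 2*M+N+3" "N+1+(M+1) = M+N+2" by simp_all
  have f1: "(fact (M+N+2)::'a) = of_nat (M+N+2) * of_nat (M+N+1) * fact (M+N)" by (rule factSS)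
  have f2: "(fact (2*M+N+3)::'a) = of_nat (2*M+N+3) * of_nat (2*M+N+2) * fact (2*M+N+1)"
  proof -
    have h: "2*M+N+3 = (2*M+N+1)+2" "2*M+N+2 = (2*M+N+1)+1" by simp_all
    show ?thesis unfolding h by (rule factSS)
  qed
  have f3: "(fact (M+N+1)::'a) = of_nat (M+N+1) * fact (M+N)" by (rule factS)
  have f4: "(fact (2*M+N+2)::'a) = of_nat (2*M+N+2) * fact (2*M+N+1)"
  proof -
    have h: "2*M+N+2 = (2*M+N+1)+1" by simp
    show ?thesis unfolding h by (rule factS)
  qed
  show ?thesis unfolding u_def e f1 f2 f3 f4
    apply (rule abstr3)
       apply (subst of_nat_eq_0_iff, arith)
      apply (subst of_nat_eq_0_iff, arith)
     apply (rule fact_nonzero)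
    using R unfolding eR of_nat_mult by simp
qed

lemma abstr6:
  fixes a F G x :: "'a::field_char_0"
  assumes "a \<noteq> 0" "G \<noteq> 0"
  shows "2 * (x * (a * F / (2 * a * G))) = x * (1 * (F / G))"
  using assms by (simp add: field_simps)

lemma uinit_pos:
  fixes x s :: "'a::field_char_0" and M :: nat
  defines "u \<equiv> (\<lambda>n. vpoly n x (M+1) s * (fact (M+1+n-1) / fact (2*(M+1)+n-1)))"
  shows "2 * u 1 = x * u 0"
proof -
  have e: "M+1+1-1 = M+1" "2*(M+1)+1-1 = 2*M+2" "M+1+0-1 = M" "2*(M+1)+0-1 = 2*M+1" by simp_all
  have v: "vpoly 1 x (M+1) s = x" "vpoly 0 x (M+1) s = 1" by (simp_all add: vpoly_def del: fact_Suc)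
  have f1: "(fact (M+1)::'a) = of_nat (M+1) * fact M" by (rule factS)
  have f2: "(fact (2*M+2)::'a) = of_nat (2*M+2) * fact (2*M+1)"
  proof -
    have h: "2*M+2 = (2*M+1)+1" by simp
    show ?thesis unfolding h by (rule factS)
  qed
  define a :: 'a where "a = of_nat (M+1)"
  have a0: "a \<noteq> 0" unfolding a_def by (subst of_nat_eq_0_iff) simp
  have e2: "(of_nat (2*M+2) :: 'a) = 2 * a" by (simp add: a_def)
  show ?thesis unfolding u_def e v f1 f2 e2 a_def[symmetric] by (rule abstr6[OF a0 fact_nonzero])
qed

lemma urec_zero:
  fixes x s :: "'a::field_char_0" and N :: nat
  defines "u \<equiv> (\<lambda>n. if n = 0 then 2 else vpoly n x 0 s)"
  shows "of_nat (Suc N + 2*0) * u (Suc N + 1) = x * of_nat (Suc N + 0) * u (Suc N) - s/4 * of_nat (Suc N) * u (Suc N - 1)"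
proof (cases N)
  case 0
  have v2: "vpoly 2 x 0 s = x^2 - s/2" by (simp add: vpoly_def numeral_2_eq_2 field_simps power2_eq_square)
  have v1: "vpoly 1 x 0 s = x" "vpoly (Suc 0) x 0 s = x" by (simp_all add: vpoly_def)
  show ?thesis using 0 unfolding u_def by (simp add: v2 v1 numeral_2_eq_2[symmetric] power2_eq_square field_simps)
next
  case (Suc N')
  have R: "of_nat ((0+N'+2)*(0+N'+1)) * vpoly (N'+3) x 0 s
    = x * of_nat ((0+N'+2)*(0+N'+1)) * vpoly (N'+2) x 0 s
      - s/4 * of_nat ((N'+2)*(2*0+N'+1)) * vpoly (N'+1) x 0 s" by (rule vrec)
  define a :: 'a where "a = of_nat (N'+1)"
  define b :: 'a where "b = of_nat (N'+2)"
  have a0: "a \<noteq> 0" unfolding a_def by (subst of_nat_eq_0_iff) simp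
  have R': "b * a * vpoly (N'+3) x 0 s = x * (b * a) * vpoly (N'+2) x 0 s - s/4 * (b * a) * vpoly (N'+1) x 0 s"
    using R unfolding mult_0_right add_0_left of_nat_mult a_def[symmetric] b_def[symmetric] .
  have R2: "a * (b * vpoly (N'+3) x 0 s - (x * b * vpoly (N'+2) x 0 s - s/4 * b * vpoly (N'+1) x 0 s)) = 0"
    using R' by algebra
  have R3: "b * vpoly (N'+3) x 0 s = x * b * vpoly (N'+2) x 0 s - s/4 * b * vpoly (N'+1) x 0 s"
    using R2 a0 by simp
  have e: "Suc N + 2*0 = N'+2" "Suc N + 1 = N'+3" "Suc N + 0 = N'+2" "Suc N = N'+2" "Suc N - 1 = N'+1"
    using Suc by simp_all
  show ?thesis unfolding u_def e using R3 unfolding b_def by (simp add: numeral_3_eq_3 numeral_2_eq_2)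
qed

lemma abstr4:
  fixes a b c v F1 F2 F3 F4 :: "'a::field"
  assumes "F2 \<noteq> 0" "F3 \<noteq> 0" "F4 \<noteq> 0"
  shows "(a*b*c*(v*(F1/F2)))/(F3/F4) = a*(F1*F4/(F3*F2))*b*c*v"
  using assms by (simp add: field_simps)

theorem mainTheorem16:
  fixes x s :: "'a::field_char_0"
  shows "(\<forall>m n. m \<ge> 1 \<longrightarrow>
            vpoly (2 * n + 1) x m s =
              (\<Sum>k = 0..n. (-1) ^ k * of_nat ((2 * n + 1) choose (2 * k + 1))
                 * (fact (m + 2 * n - 2 * k - 1) * fact (2 * m + 2 * n)
                    / (fact (m + 2 * n) * fact (2 * m + 2 * n - 2 * k - 1)))
                 * (tangent_number (2 * k + 1) / 2 ^ (2 * k + 1))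
                 * x ^ (2 * k + 1) * vpoly (2 * n - 2 * k) x m s))
       \<and> (\<forall>n. vpoly (2 * n + 1) x 0 s =
              (\<Sum>k<n. (-1) ^ k * of_nat ((2 * n + 1) choose (2 * k + 1))
                 * (tangent_number (2 * k + 1) / 2 ^ (2 * k + 1))
                 * x ^ (2 * k + 1) * vpoly (2 * n - 2 * k) x 0 s)
              + (-1) ^ n * (tangent_number (2 * n + 1) / 2 ^ (2 * n)) * x ^ (2 * n + 1))"
proof (intro conjI allI impI)
  fix m n :: nat
  assume "m \<ge> 1"
  then obtain M where mM: "m = M+1" by (metis le_add_diff_inverse2)
  define \<rho> :: "nat \<Rightarrow> 'a" where "\<rho> = (\<lambda>n. fact (M+1+n-1) / fact (2*(M+1)+n-1))"
  define u where "u = (\<lambda>n. vpoly n x (M+1) s * \<rho> n)"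
  have uu: "u = (\<lambda>n. vpoly n x (M+1) s * (fact (M+1+n-1) / fact (2*(M+1)+n-1)))"
    by (simp add: u_def \<rho>_def)
  have rec: "of_nat (n+2*(M+1)) * u (n+1) = x * of_nat (n+(M+1)) * u n - s/4 * of_nat n * u (n-1)"
    if "n \<ge> 1" for n
  proof -
    define N where "N = n - 1"
    have nN: "n = N+1" using that unfolding N_def by simp
    show ?thesis unfolding nN uu using urec_pos[where M=M and N=N and x=x and s=s] by simp
  qed
  have init: "2 * u 1 = x * u 0" unfolding uu by (rule uinit_pos[where M=M and x=x and s=s])
  have odd0: "fps_nth (fps_exp (-(x/2)) * Abs_fps (\<lambda>n. u n / fact n)) M' = 0" if "odd M'" for M'
    by (rule ode_step[OF rec init that])
  have T: "u (2*n+1) = (\<Sum>k=0..n. (-1)^k * of_nat ((2*n+1) choose (2*k+1))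
                 * (tangent_number (2*k+1) / 2^(2*k+1)) * x^(2*k+1) * u (2*n-2*k))"
    by (rule tanh_step[OF odd0])
  have rnz: "\<rho> (2*n+1) \<noteq> 0" by (simp add: \<rho>_def del: fact_Suc)
  have "vpoly (2*n+1) x m s = u (2*n+1) / \<rho> (2*n+1)" using rnz by (simp add: u_def mM)
  also have "\<dots> = (\<Sum>k=0..n. (-1)^k * of_nat ((2*n+1) choose (2*k+1))
                 * (tangent_number (2*k+1) / 2^(2*k+1)) * x^(2*k+1) * u (2*n-2*k) / \<rho> (2*n+1))"
    unfolding T by (simp add: sum_divide_distrib)
  also have "\<dots> = (\<Sum>k = 0..n. (-1) ^ k * of_nat ((2 * n + 1) choose (2 * k + 1))
                 * (fact (m + 2 * n - 2 * k - 1) * fact (2 * m + 2 * n)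
                    / (fact (m + 2 * n) * fact (2 * m + 2 * n - 2 * k - 1)))
                 * (tangent_number (2 * k + 1) / 2 ^ (2 * k + 1))
                 * x ^ (2 * k + 1) * vpoly (2 * n - 2 * k) x m s)"
  proof (rule sum.cong[OF refl])
    fix k assume "k \<in> {0..n}"
    then have kn: "k \<le> n" by simp
    have e: "m+(2*n-2*k)-1 = m + 2*n - 2*k - 1" "2*m+(2*n-2*k)-1 = 2*m+2*n-2*k-1"
      "m+(2*n+1)-1 = m+2*n" "2*m+(2*n+1)-1 = 2*m+2*n" using kn by simp_all
    show "(-1)^k * of_nat ((2*n+1) choose (2*k+1))
                 * (tangent_number (2*k+1) / 2^(2*k+1)) * x^(2*k+1) * u (2*n-2*k) / \<rho> (2*n+1) =
          (-1) ^ k * of_nat ((2 * n + 1) choose (2 * k + 1))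
                 * (fact (m + 2 * n - 2 * k - 1) * fact (2 * m + 2 * n)
                    / (fact (m + 2 * n) * fact (2 * m + 2 * n - 2 * k - 1)))
                 * (tangent_number (2 * k + 1) / 2 ^ (2 * k + 1))
                 * x ^ (2 * k + 1) * vpoly (2 * n - 2 * k) x m s"
      unfolding u_def \<rho>_def mM[symmetric] unfolding e
      by (rule abstr4) simp_all
  qed
  finally show "vpoly (2 * n + 1) x m s =
              (\<Sum>k = 0..n. (-1) ^ k * of_nat ((2 * n + 1) choose (2 * k + 1))
                 * (fact (m + 2 * n - 2 * k - 1) * fact (2 * m + 2 * n)
                    / (fact (m + 2 * n) * fact (2 * m + 2 * n - 2 * k - 1)))
                 * (tangent_number (2 * k + 1) / 2 ^ (2 * k + 1))
                 * x ^ (2 * k + 1) * vpoly (2 * n - 2 * k) x m s)" .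
next
  fix n :: nat
  define u :: "nat \<Rightarrow> 'a" where "u = (\<lambda>n. if n = 0 then 2 else vpoly n x 0 s)"
  have rec: "of_nat (n+2*0) * u (n+1) = x * of_nat (n+0) * u n - s/4 * of_nat n * u (n-1)"
    if "n \<ge> 1" for n
  proof -
    define N where "N = n - 1"
    have nN: "n = Suc N" using that unfolding N_def by simp
    show ?thesis unfolding nN u_def using urec_zero[where N=N and x=x and s=s] by simp
  qed
  have init: "2 * u 1 = x * u 0" by (simp add: u_def vpoly_def)
  have odd0: "fps_nth (fps_exp (-(x/2)) * Abs_fps (\<lambda>n. u n / fact n)) M' = 0" if "odd M'" for M'
    by (rule ode_step[OF rec init that])
  have T: "u (2*n+1) = (\<Sum>k=0..n. (-1)^k * of_nat ((2*n+1) choose (2*k+1))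
                 * (tangent_number (2*k+1) / 2^(2*k+1)) * x^(2*k+1) * u (2*n-2*k))"
    by (rule tanh_step[OF odd0])
  have "vpoly (2*n+1) x 0 s = u (2*n+1)" by (simp add: u_def)
  also have "\<dots> = (\<Sum>k<n. (-1)^k * of_nat ((2*n+1) choose (2*k+1))
                 * (tangent_number (2*k+1) / 2^(2*k+1)) * x^(2*k+1) * u (2*n-2*k))
         + (-1)^n * of_nat ((2*n+1) choose (2*n+1))
                 * (tangent_number (2*n+1) / 2^(2*n+1)) * x^(2*n+1) * u (2*n-2*n)"
    unfolding T atLeast0AtMost lessThan_Suc_atMost[symmetric] sum.lessThan_Suc ..
  also have "\<dots> = (\<Sum>k<n. (-1) ^ k * of_nat ((2 * n + 1) choose (2 * k + 1))
                 * (tangent_number (2 * k + 1) / 2 ^ (2 * k + 1))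
                 * x ^ (2 * k + 1) * vpoly (2 * n - 2 * k) x 0 s)
              + (-1) ^ n * (tangent_number (2 * n + 1) / 2 ^ (2 * n)) * x ^ (2 * n + 1)"
  proof -
    have s1: "(\<Sum>k<n. (-1)^k * of_nat ((2*n+1) choose (2*k+1))
                 * (tangent_number (2*k+1) / 2^(2*k+1)) * x^(2*k+1) * u (2*n-2*k))
       = (\<Sum>k<n. (-1) ^ k * of_nat ((2 * n + 1) choose (2 * k + 1))
                 * (tangent_number (2 * k + 1) / 2 ^ (2 * k + 1))
                 * x ^ (2 * k + 1) * vpoly (2 * n - 2 * k) x 0 s)"
      by (rule sum.cong[OF refl]) (simp add: u_def)
    have p: "(2::'a)^(2*n+1) = 2 * 2^(2*n)" by simp
    have s2: "(-1)^n * of_nat ((2*n+1) choose (2*n+1))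
                 * (tangent_number (2*n+1) / 2^(2*n+1)) * x^(2*n+1) * u (2*n-2*n)
       = (-1) ^ n * (tangent_number (2 * n + 1) / 2 ^ (2 * n)) * x ^ (2 * n + 1)"
      unfolding p by (simp add: u_def)
    show ?thesis unfolding s1 s2 ..
  qed
  finally show "vpoly (2 * n + 1) x 0 s =
              (\<Sum>k<n. (-1) ^ k * of_nat ((2 * n + 1) choose (2 * k + 1))
                 * (tangent_number (2 * k + 1) / 2 ^ (2 * k + 1))
                 * x ^ (2 * k + 1) * vpoly (2 * n - 2 * k) x 0 s)
              + (-1) ^ n * (tangent_number (2 * n + 1) / 2 ^ (2 * n)) * x ^ (2 * n + 1)" .
qed


end
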